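(* Let $p>1$ and $q>p-1$ with $q>0$, and let $f_{p,q}(t)=\sum_{j=1}^\infty j^{-p}\exp(i t j^q)$ for $t\in\mathbb{R}$. Then there is a constant $C<\infty$ such that for all $t,h\in\mathbb{R}$, $$|f_{p,q}(t+h)-f_{p,q}(t)|\le C|h|^{\alpha},\qquad \alpha=\frac{p-1}{q}.$$ *)

theory Defs
  imports "HOL-Analysis.Analysis"
begin

definition f_pq :: "real \<Rightarrow> real \<Rightarrow> real \<Rightarrow> complex" where
  "f_pq p q t = (\<Sum>n. complex_of_real (real (Suc n) powr (-p))
                    * exp (\<i> * complex_of_real (t * real (Suc n) powr q)))"

end

theory Submission
  imports Defs "HOL-Probability.Characteristic_Functions"
begin

lemma exp_i_minus_one_le: "cmod (exp (\<i> * complex_of_real x) - 1) \<le> \<bar>x\<bar>"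
  using iexp_approx1[of x 0] by simp

lemma exp_i_minus_one_le2: "cmod (exp (\<i> * complex_of_real x) - 1) \<le> 2"
proof -
  have "cmod (exp (\<i> * complex_of_real x) - 1) \<le> cmod (exp (\<i> * complex_of_real x)) + cmod 1"
    by (rule norm_triangle_ineq4)
  also have "\<dots> = 2" by simp
  finally show ?thesis .
qed

lemma tele1:
  fixes p x :: real
  assumes "p > 1" "x > 0"
  shows "(x+1) powr (-p) \<le> (x powr (1-p) - (x+1) powr (1-p)) / (p-1)"
proof -
  have der: "\<And>y. x \<le> y \<Longrightarrow> y \<le> x+1 \<Longrightarrow> ((\<lambda>y. y powr (1-p)) has_real_derivative (1-p) * y powr (-p)) (at y)"
  proof -
    fix y assume "x \<le> y" "y \<le> x+1"
    then have "y > 0" using assms by linarith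
    from has_real_derivative_powr[OF this, of "1-p"] show "((\<lambda>y. y powr (1-p)) has_real_derivative (1-p) * y powr (-p)) (at y)"
      by simp
  qed
  obtain z where z: "x < z" "z < x+1" "(x+1) powr (1-p) - x powr (1-p) = (x+1-x) * ((1-p) * z powr (-p))"
    using MVT2[of x "x+1" "\<lambda>y. y powr (1-p)" "\<lambda>y. (1-p) * y powr (-p)"] der by auto
  have "(x+1) powr (-p) \<le> z powr (-p)"
    by (rule powr_mono2') (use assms z in auto)
  have e: "x powr (1-p) - (x+1) powr (1-p) = (p-1) * z powr (-p)"
    using z(3) by (simp add: algebra_simps)
  have "(p-1) * (x+1) powr (-p) \<le> (p-1) * z powr (-p)"
    by (rule mult_left_mono) (use \<open>(x+1) powr (-p) \<le> z powr (-p)\<close> assms in auto)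
  then have "(p-1) * (x+1) powr (-p) \<le> x powr (1-p) - (x+1) powr (1-p)"
    using e by simp
  then show ?thesis using assms by (simp add: field_simps)
qed

lemma tele2:
  fixes s k :: real
  assumes "-1 < s" "s < 0" "k > 1"
  shows "k powr s \<le> (k powr (s+1) - (k-1) powr (s+1)) / (s+1)"
proof -
  have der: "\<And>y. k-1 \<le> y \<Longrightarrow> y \<le> k \<Longrightarrow> ((\<lambda>y. y powr (s+1)) has_real_derivative (s+1) * y powr s) (at y)"
  proof -
    fix y assume "k-1 \<le> y" "y \<le> k"
    then have "y > 0" using assms by linarith
    from has_real_derivative_powr[OF this, of "s+1"] show "((\<lambda>y. y powr (s+1)) has_real_derivative (s+1) * y powr s) (at y)"
      by simp
  qed
  obtain z where z: "k-1 < z" "z < k" "k powr (s+1) - (k-1) powr (s+1) = (k-(k-1)) * ((s+1) * z powr s)"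
    using MVT2[of "k-1" k "\<lambda>y. y powr (s+1)" "\<lambda>y. (s+1) * y powr s"] der by auto
  have "k powr s \<le> z powr s"
    by (rule powr_mono2') (use assms z in auto)
  have e: "k powr (s+1) - (k-1) powr (s+1) = (s+1) * z powr s"
    using z(3) by simp
  have "(s+1) * k powr s \<le> (s+1) * z powr s"
    by (rule mult_left_mono) (use \<open>k powr s \<le> z powr s\<close> assms in auto)
  then have "(s+1) * k powr s \<le> k powr (s+1) - (k-1) powr (s+1)"
    using e by simp
  then show ?thesis using assms by (simp add: field_simps)
qed

lemma partial_bound:
  fixes s :: real
  assumes "s > -1"
  shows "(\<Sum>n<N. real (Suc n) powr s) \<le> (1 + 1/(s+1)) * real N powr (s+1)"
proof (cases "s \<ge> 0")
  case True
  have "(\<Sum>n<N. real (Suc n) powr s) \<le> (\<Sum>n<N. real N powr s)"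
    by (rule sum_mono) (auto intro!: powr_mono2 simp: True)
  also have "\<dots> = real N powr (s+1)"
    by (cases "N = 0") (auto simp: powr_add)
  also have "\<dots> \<le> (1 + 1/(s+1)) * real N powr (s+1)"
    using mult_right_mono[of 1 "1 + 1/(s+1)" "real N powr (s+1)"] assms by simp
  finally show ?thesis .
next
  case False
  define g where "g n = real n powr (s+1) / (s+1)" for n :: nat
  have "(\<Sum>n<N. real (Suc n) powr s) \<le> (\<Sum>n<N. g (Suc n) - g n)"
  proof (rule sum_mono)
    fix n assume "n \<in> {..<N}"
    show "real (Suc n) powr s \<le> g (Suc n) - g n"
    proof (cases "n = 0")
      case True
      then show ?thesis using assms \<open>\<not> s \<ge> 0\<close> by (simp add: g_def field_simps)
    next
      case False
      then have "real (Suc n) > 1" by simp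
      from tele2[OF assms _ this] \<open>\<not> s \<ge> 0\<close>
      show ?thesis by (simp add: g_def diff_divide_distrib)
    qed
  qed
  also have "\<dots> = g N - g 0" by (rule sum_lessThan_telescope)
  also have "\<dots> = real N powr (s+1) / (s+1)" by (simp add: g_def)
  also have "\<dots> \<le> (1 + 1/(s+1)) * real N powr (s+1)"
    using assms by (simp add: distrib_right)
  finally show ?thesis .
qed


lemma tail_bound:
  fixes p :: real
  assumes "p > 1" "N \<ge> 1"
  shows "summable (\<lambda>n. real (Suc (n+N)) powr (-p))"
    and "(\<Sum>n. real (Suc (n+N)) powr (-p)) \<le> real N powr (1-p) / (p-1)"
proof -
  have s0: "summable (\<lambda>n. real n powr (-p))"
    using summable_real_powr_iff[of "-p"] assms by simp
  have "summable (\<lambda>n. real (n + Suc N) powr (-p))"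
    using summable_ignore_initial_segment[OF s0, of "Suc N"] by simp
  then show sm: "summable (\<lambda>n. real (Suc (n+N)) powr (-p))" by simp
  define g where "g n = real (N+n) powr (1-p) / (p-1)" for n
  show "(\<Sum>n. real (Suc (n+N)) powr (-p)) \<le> real N powr (1-p) / (p-1)"
  proof (rule suminf_le_const[OF sm])
    fix M
    have "(\<Sum>n<M. real (Suc (n+N)) powr (-p)) \<le> (\<Sum>n<M. g n - g (Suc n))"
    proof (rule sum_mono)
      fix n assume "n \<in> {..<M}"
      have "real (N+n) > 0" using assms by simp
      from tele1[OF assms(1) this]
      show "real (Suc (n+N)) powr (-p) \<le> g n - g (Suc n)"
        by (simp add: g_def diff_divide_distrib add.commute add.left_commute)
    qed
    also have "\<dots> = g 0 - g M" by (rule sum_lessThan_telescope')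
    also have "\<dots> \<le> g 0" using assms by (simp add: g_def)
    also have "\<dots> = real N powr (1-p) / (p-1)" by (simp add: g_def)
    finally show "(\<Sum>n<M. real (Suc (n+N)) powr (-p)) \<le> real N powr (1-p) / (p-1)" .
  qed
qed


lemma key_bound:
  fixes p q :: real
  assumes p1: "p > 1" and qp: "q > p - 1" and q0: "q > 0"
  defines "a \<equiv> \<lambda>n. real (Suc n) powr (-p)"
  defines "c \<equiv> \<lambda>h n. cmod (exp (\<i> * complex_of_real (h * real (Suc n) powr q)) - 1)"
  shows "\<exists>C. \<forall>h. summable (\<lambda>n. a n * c h n) \<and> (\<Sum>n. a n * c h n) \<le> C * \<bar>h\<bar> powr ((p-1)/q)"
proof -
  have suma: "summable a"
  proof -
    have "summable (\<lambda>n. real n powr (-p))"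
      using summable_real_powr_iff[of "-p"] p1 by simp
    then have "summable (\<lambda>n. real (Suc n) powr (-p))"
      by (subst summable_Suc_iff)
    then show ?thesis by (simp add: a_def)
  qed
  have a0: "a n \<ge> 0" for n by (simp add: a_def)
  have c2: "c h n \<le> 2" for h n unfolding c_def by (rule exp_i_minus_one_le2)
  have c0: "c h n \<ge> 0" for h n unfolding c_def by simp
  have ch: "c h n \<le> \<bar>h\<bar> * real (Suc n) powr q" for h n
    unfolding c_def using exp_i_minus_one_le[of "h * real (Suc n) powr q"] by (simp add: abs_mult)
  have b2: "a n * c h n \<le> 2 * a n" for h n
    using mult_left_mono[OF c2[of h n] a0[of n]] by (simp add: mult.commute)
  have sumb: "summable (\<lambda>n. a n * c h n)" for h
    by (rule summable_comparison_test[of _ "\<lambda>n. 2 * a n"])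
       (use b2 a0 c0 suma in \<open>auto intro!: summable_mult\<close>)
  define S where "S = suminf a"
  have S0: "S \<ge> 0" unfolding S_def using suma a0 by (simp add: suminf_nonneg)
  define K where "K = 1 + 1/(q-p+1)"
  have K0: "K \<ge> 0" using qp by (simp add: K_def)
  define C where "C = 2*S + K + 2 * 2 powr (p-1) / (p-1)"
  define \<alpha> where "\<alpha> = (p-1)/q"
  have al0: "\<alpha> \<ge> 0" using p1 q0 by (simp add: \<alpha>_def)
  have D0: "2 * 2 powr (p-1) / (p-1) \<ge> 0" using p1 by simp
  have main: "(\<Sum>n. a n * c h n) \<le> C * \<bar>h\<bar> powr \<alpha>" for h
  proof -
    consider "h = 0" | "\<bar>h\<bar> \<ge> 1" | "0 < \<bar>h\<bar>" "\<bar>h\<bar> < 1" by linarith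
    then show ?thesis
    proof cases
      case 1
      then show ?thesis by (simp add: c_def)
    next
      case 2
      have "(\<Sum>n. a n * c h n) \<le> (\<Sum>n. 2 * a n)"
        by (rule suminf_le) (use b2 sumb suma in \<open>auto intro!: summable_mult\<close>)
      also have "\<dots> = 2 * S" unfolding S_def using suma by (simp add: suminf_mult)
      also have "\<dots> \<le> C" unfolding C_def using K0 D0 by simp
      also have "\<dots> \<le> C * \<bar>h\<bar> powr \<alpha>"
      proof -
        have "1 \<le> \<bar>h\<bar> powr \<alpha>" using 2 al0 by (rule ge_one_powr_ge_zero)
        moreover have "C \<ge> 0" unfolding C_def using S0 K0 D0 by simp
        ultimately show ?thesis using mult_left_mono[of 1 "\<bar>h\<bar> powr \<alpha>" C] by simp
      qed
      finally show ?thesis .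
    next
      case 3
      define H where "H = \<bar>h\<bar> powr (-1/q)"
      have H1: "H \<ge> 1"
        unfolding H_def using powr_mono2'[of "-1/q" "\<bar>h\<bar>" 1] 3 q0 by simp
      define N where "N = nat \<lfloor>H\<rfloor>"
      have NH: "real N \<le> H" using H1 unfolding N_def by linarith
      have HN: "H < real N + 1" using H1 unfolding N_def by linarith
      have N1: "N \<ge> 1" using H1 unfolding N_def by linarith
      have N1r: "real N \<ge> 1" using N1 by simp
      have hpos: "\<bar>h\<bar> > 0" using 3 by simp
      have Hpow: "H powr r = \<bar>h\<bar> powr (-r/q)" for r
        unfolding H_def by (simp add: powr_powr)
      have split: "(\<Sum>n. a n * c h n) = (\<Sum>n. a (n+N) * c h (n+N)) + (\<Sum>n<N. a n * c h n)"
        by (rule suminf_split_initial_segment[OF sumb])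
      have head: "(\<Sum>n<N. a n * c h n) \<le> K * \<bar>h\<bar> powr \<alpha>"
      proof -
        have "(\<Sum>n<N. a n * c h n) \<le> (\<Sum>n<N. \<bar>h\<bar> * real (Suc n) powr (q-p))"
        proof (rule sum_mono)
          fix n assume "n \<in> {..<N}"
          have "a n * c h n \<le> a n * (\<bar>h\<bar> * real (Suc n) powr q)"
            by (rule mult_left_mono[OF ch a0])
          also have "\<dots> = \<bar>h\<bar> * (real (Suc n) powr (-p) * real (Suc n) powr q)"
            by (simp add: a_def)
          also have "\<dots> = \<bar>h\<bar> * real (Suc n) powr (q-p)"
            by (simp add: powr_add[symmetric])
          finally show "a n * c h n \<le> \<bar>h\<bar> * real (Suc n) powr (q-p)" .
        qed
        also have "\<dots> = \<bar>h\<bar> * (\<Sum>n<N. real (Suc n) powr (q-p))"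
          by (simp add: sum_distrib_left)
        also have "\<dots> \<le> \<bar>h\<bar> * (K * real N powr (q-p+1))"
          using partial_bound[of "q-p" N] qp unfolding K_def
          by (intro mult_left_mono) (auto simp: add_ac)
        also have "\<dots> \<le> \<bar>h\<bar> * (K * H powr (q-p+1))"
          using NH qp K0 by (intro mult_left_mono powr_mono2) auto
        also have "\<dots> = K * (\<bar>h\<bar> powr 1 * \<bar>h\<bar> powr (-(q-p+1)/q))"
          using hpos by (simp add: Hpow)
        also have "\<dots> = K * \<bar>h\<bar> powr \<alpha>"
        proof -
          have e: "1 + (-(q-p+1)/q) = \<alpha>" using q0 by (simp add: \<alpha>_def field_simps)
          have "\<bar>h\<bar> powr 1 * \<bar>h\<bar> powr (-(q-p+1)/q) = \<bar>h\<bar> powr (1 + (-(q-p+1)/q))"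
            by (rule powr_add[symmetric])
          then show ?thesis unfolding e by simp
        qed
        finally show ?thesis .
      qed
      have tail: "(\<Sum>n. a (n+N) * c h (n+N)) \<le> 2 * 2 powr (p-1) / (p-1) * \<bar>h\<bar> powr \<alpha>"
      proof -
        have st: "summable (\<lambda>n. a (n+N))"
          using tail_bound(1)[OF p1 N1] by (simp add: a_def)
        have "(\<Sum>n. a (n+N) * c h (n+N)) \<le> (\<Sum>n. 2 * a (n+N))"
          by (rule suminf_le) (use b2 summable_ignore_initial_segment[OF sumb] st in \<open>auto intro!: summable_mult\<close>)
        also have "\<dots> = 2 * (\<Sum>n. a (n+N))" using st by (simp add: suminf_mult)
        also have "\<dots> \<le> 2 * (real N powr (1-p) / (p-1))"
          using tail_bound(2)[OF p1 N1] by (simp add: a_def)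
        also have "\<dots> \<le> 2 * ((H/2) powr (1-p) / (p-1))"
        proof -
          have "real N powr (1-p) \<le> (H/2) powr (1-p)"
          proof -
            have "H/2 \<le> real N" using HN N1r by linarith
            then show ?thesis by (intro powr_mono2') (use p1 H1 in auto)
          qed
          then show ?thesis using p1 by (simp add: divide_right_mono)
        qed
        also have "\<dots> = 2 * (H powr (1-p) * 2 powr (p-1) / (p-1))"
        proof -
          have e2: "2 powr (p-1) = 1 / 2 powr (1-p)" using powr_minus_divide[of 2 "1-p"] by simp
          show ?thesis using H1 by (simp add: e2 powr_divide)
        qed
        also have "\<dots> = 2 * 2 powr (p-1) / (p-1) * \<bar>h\<bar> powr \<alpha>"
        proof -
          have "H powr (1-p) = \<bar>h\<bar> powr \<alpha>"
            unfolding Hpow \<alpha>_def using q0 by (simp add: field_simps)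
          then show ?thesis by simp
        qed
        finally show ?thesis .
      qed
      have "(\<Sum>n. a n * c h n) \<le> (K + 2 * 2 powr (p-1) / (p-1)) * \<bar>h\<bar> powr \<alpha>"
        using split head tail by (simp add: distrib_right)
      also have "\<dots> \<le> C * \<bar>h\<bar> powr \<alpha>"
        unfolding C_def using S0 by (intro mult_right_mono) auto
      finally show ?thesis .
    qed
  qed
  show ?thesis using main sumb unfolding \<alpha>_def by blast
qed


theorem mainTheorem9:
  fixes p q :: real
  assumes "p > 1" and "q > p - 1" and "q > 0"
  shows "\<exists>C::real. \<forall>t h :: real.
           cmod (f_pq p q (t + h) - f_pq p q t) \<le> C * \<bar>h\<bar> powr ((p - 1) / q)"
proof -
  define a where "a n = real (Suc n) powr (-p)" for n
  define c where "c h n = cmod (exp (\<i> * complex_of_real (h * real (Suc n) powr q)) - 1)" for h n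
  obtain C where C: "\<And>h. summable (\<lambda>n. a n * c h n)" "\<And>h. (\<Sum>n. a n * c h n) \<le> C * \<bar>h\<bar> powr ((p-1)/q)"
    using key_bound[OF assms] unfolding a_def c_def by auto
  have suma: "summable a"
  proof -
    have "summable (\<lambda>n. real n powr (-p))"
      using summable_real_powr_iff[of "-p"] assms(1) by simp
    then have "summable (\<lambda>n. real (Suc n) powr (-p))"
      by (subst summable_Suc_iff)
    then show ?thesis by (simp add: a_def[abs_def])
  qed
  define u where "u t n = complex_of_real (a n) * exp (\<i> * complex_of_real (t * real (Suc n) powr q))" for t n
  have fu: "f_pq p q t = suminf (u t)" for t unfolding f_pq_def u_def a_def ..
  have nu: "norm (u t n) = a n" for t n
    unfolding u_def norm_mult by (simp add: a_def)
  have su: "summable (u t)" for t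
    by (rule summable_norm_cancel) (use suma nu in simp)
  have nd: "norm (u (t+h) n - u t n) = a n * c h n" for t h n
  proof -
    have "u (t+h) n - u t n = complex_of_real (a n) * exp (\<i> * complex_of_real (t * real (Suc n) powr q))
          * (exp (\<i> * complex_of_real (h * real (Suc n) powr q)) - 1)"
      by (simp add: u_def distrib_right distrib_left exp_add algebra_simps)
    then show ?thesis by (simp add: norm_mult c_def a_def)
  qed
  show ?thesis
  proof (intro exI allI)
    fix t h :: real
    have "f_pq p q (t + h) - f_pq p q t = (\<Sum>n. u (t+h) n - u t n)"
      unfolding fu using suminf_diff[OF su[of "t+h"] su[of t]] by simp
    then have "cmod (f_pq p q (t + h) - f_pq p q t) \<le> (\<Sum>n. norm (u (t+h) n - u t n))"
      using summable_norm[of "\<lambda>n. u (t+h) n - u t n"] C(1)[of h] by (simp add: nd)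
    also have "\<dots> = (\<Sum>n. a n * c h n)" by (simp add: nd)
    also have "\<dots> \<le> C * \<bar>h\<bar> powr ((p-1)/q)" by (rule C(2))
    finally show "cmod (f_pq p q (t + h) - f_pq p q t) \<le> C * \<bar>h\<bar> powr ((p - 1) / q)" .
  qed
qed

end
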